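(* Let $\mathbf A\subset\mathbb Z^n_{\ge0}$ be a finite set not contained in any coordinate hyperplane $E_i=\{x_i=0\}$. Put $\Delta_i=\mathrm{Conv}(\mathbf A\setminus E_i)$ for $i=1,\dots,n$. Then: (1) $\Delta_1,\dots,\Delta_n$ are semi-interlaced in $(\mathrm{Conv}(\mathbf A),\mathbf A)$; (2) a proper face $K$ of $\mathrm{Conv}(\mathbf A)$ is a suture if and only if there is a coordinate subspace $E(K)$ with $K\subset E(K)$ and $\dim E(K)=\dim K$.
   Context: Let $A$ be a finite lattice set and $\mathbf P=\mathrm{Conv}(A)$. For a polytope $D$ with vertices in $A$, let $\mathcal D$ be the set of inclusion-maximal faces of $\mathbf P$ disjoint from $D$. $D$ is a daughter sub-polytope of $(\mathbf P,A)$ if these faces are pairwise disjoint and $D=\mathrm{Conv}(A\setminus\bigcup_{K\in\mathcal D}K)$. Daughter sub-polytopes $D_1,\dots,D_n$ are semi-interlaced in $(\mathbf P,A)$ if every face $\mathbf P^\gamma$, $\gamma\neq0$, is met by at least $\dim\mathbf P^\gamma$ of the $D_i$. Here $\mathbf P^\gamma$ is the face where $\gamma$ is minimal. A face is a suture if it is met by exactly as many $D_i$ as its dimension. *)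

theory Defs
  imports "HOL-Analysis.Analysis"
begin

definition min_face :: "(real^'n) set \<Rightarrow> real^'n \<Rightarrow> (real^'n) set" where
  "min_face P \<gamma> = {x \<in> P. \<forall>y\<in>P. \<gamma> \<bullet> x \<le> \<gamma> \<bullet> y}"

definition max_disjoint_faces :: "(real^'n) set \<Rightarrow> (real^'n) set \<Rightarrow> (real^'n) set set" where
  "max_disjoint_faces A D =
     {K. K face_of convex hull A \<and> K \<inter> D = {} \<and>
         (\<forall>K'. K' face_of convex hull A \<and> K' \<inter> D = {} \<and> K \<subseteq> K' \<longrightarrow> K' = K)}"

definition daughter :: "(real^'n) set \<Rightarrow> (real^'n) set \<Rightarrow> bool" where
  "daughter A D \<longleftrightarrow>
     (\<exists>V. V \<subseteq> A \<and> D = convex hull V) \<and>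
     pairwise disjnt (max_disjoint_faces A D) \<and>
     D = convex hull (A - \<Union>(max_disjoint_faces A D))"

definition meet_count :: "('i::finite \<Rightarrow> (real^'n) set) \<Rightarrow> (real^'n) set \<Rightarrow> nat" where
  "meet_count D K = card {i. D i \<inter> K \<noteq> {}}"

definition semi_interlaced :: "(real^'n) set \<Rightarrow> ('i::finite \<Rightarrow> (real^'n) set) \<Rightarrow> bool" where
  "semi_interlaced A D \<longleftrightarrow>
     (\<forall>i. daughter A (D i)) \<and>
     (\<forall>\<gamma>::real^'n. \<gamma> \<noteq> 0 \<longrightarrow>
        int (meet_count D (min_face (convex hull A) \<gamma>)) \<ge> aff_dim (min_face (convex hull A) \<gamma>))"

definition suture :: "(real^'n) set \<Rightarrow> ('i::finite \<Rightarrow> (real^'n) set) \<Rightarrow> (real^'n) set \<Rightarrow> bool" where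
  "suture A D K \<longleftrightarrow> K face_of convex hull A \<and> int (meet_count D K) = aff_dim K"

definition coord_subspace :: "'n set \<Rightarrow> (real^'n) set" where
  "coord_subspace I = {x. \<forall>i. i \<notin> I \<longrightarrow> x $ i = 0}"

end

theory Submission
  imports Defs
begin

lemma cs_subspace: "subspace (coord_subspace (I::'n::finite set))"
proof -
  have "vec.subspace {x::real^'n. \<forall>i. i \<notin> I \<longrightarrow> x$i = 0}"
    by (rule subspace_substandard_cart)
  thus ?thesis unfolding coord_subspace_def subspace_vec_eq .
qed

lemma cs_dim: "dim (coord_subspace (I::'n::finite set)) = card I"
proof -
  have "vec.dim {x::real^'n. \<forall>i. i \<notin> I \<longrightarrow> x$i = 0} = card I"
    by (rule dim_substandard_cart)
  thus ?thesis unfolding coord_subspace_def dim_vec_eq .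
qed

lemma face_hull_eq:
  fixes A :: "(real^'n) set"
  assumes "finite A" "K face_of convex hull A"
  shows "K = convex hull (A \<inter> K)"
proof -
  obtain S' where S': "S' \<subseteq> A" "K = convex hull S'"
    using face_of_convex_hull_subset[OF finite_imp_compact[OF assms(1)] assms(2)] by blast
  have "S' \<subseteq> convex hull S'" by (rule hull_subset)
  hence "S' \<subseteq> A \<inter> K" using S' by (simp add: le_inf_iff)
  hence "K \<subseteq> convex hull (A \<inter> K)" unfolding S'(2) by (rule hull_mono)
  moreover have "convex hull (A \<inter> K) \<subseteq> K"
    by (rule hull_minimal) (auto simp: face_of_imp_convex[OF assms(2)])
  ultimately show ?thesis by blast
qed

lemma meet_iff:
  fixes A :: "(real^'n) set"
  assumes "finite A" "K face_of convex hull A" "B \<subseteq> A"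
  shows "convex hull B \<inter> K \<noteq> {} \<longleftrightarrow> B \<inter> K \<noteq> {}"
proof
  assume "B \<inter> K \<noteq> {}"
  then obtain y where "y \<in> B" "y \<in> K" by auto
  moreover have "y \<in> convex hull B" using \<open>y \<in> B\<close> by (rule hull_inc)
  ultimately show "convex hull B \<inter> K \<noteq> {}" by auto
next
  assume ne: "convex hull B \<inter> K \<noteq> {}"
  have sub: "convex hull B \<subseteq> convex hull A" using assms(3) by (rule hull_mono)
  have cK: "convex K" using assms(2) by (rule face_of_imp_convex)
  have fc: "(convex hull B \<inter> K) face_of convex hull B"
    unfolding face_of_def
  proof (intro conjI ballI impI)
    show "convex (convex hull B \<inter> K)"
      using cK by (simp add: convex_Int)
    fix a b x assume ab: "a \<in> convex hull B" "b \<in> convex hull B" "x \<in> convex hull B \<inter> K"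
      "x \<in> open_segment a b"
    have a2: "a \<in> convex hull A" "b \<in> convex hull A" using ab(1,2) sub by (auto simp: subset_iff)
    have "a \<in> K \<and> b \<in> K"
      using assms(2) a2 ab(3,4) unfolding face_of_def by (meson IntD2)
    thus "a \<in> convex hull B \<inter> K" "b \<in> convex hull B \<inter> K" using ab by auto
  qed auto
  have fB: "finite B" using assms(1,3) by (rule rev_finite_subset)
  have "compact (convex hull B \<inter> K)"
    using face_of_imp_compact[OF convex_convex_hull finite_imp_compact_convex_hull[OF fB] fc] .
  then obtain v where "v extreme_point_of (convex hull B \<inter> K)"
    using extreme_point_exists_convex[of "convex hull B \<inter> K"] ne cK by (auto simp: convex_Int)
  then have "v extreme_point_of convex hull B" "v \<in> K"
    using extreme_point_of_face[OF fc] by auto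
  then show "B \<inter> K \<noteq> {}" using extreme_point_of_convex_hull by (metis IntI empty_iff)
qed

definition supp :: "(real^'n) set \<Rightarrow> (real^'n) set \<Rightarrow> 'n set" where
  "supp A K = {i. \<exists>a\<in>A \<inter> K. a $ i \<noteq> 0}"

lemma count_eq:
  fixes A :: "(real^'n) set"
  assumes "finite A" "K face_of convex hull A"
  shows "meet_count (\<lambda>i. convex hull {a \<in> A. a $ i \<noteq> 0}) K = card (supp A K)"
proof -
  have "\<And>i. (convex hull {a \<in> A. a $ i \<noteq> 0} \<inter> K \<noteq> {}) = ({a \<in> A. a $ i \<noteq> 0} \<inter> K \<noteq> {})"
    by (rule meet_iff[OF assms]) auto
  also have "\<And>i. ({a \<in> A. a $ i \<noteq> 0} \<inter> K \<noteq> {}) = (\<exists>a\<in>A \<inter> K. a $ i \<noteq> 0)"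
    by auto
  finally have "{i. convex hull {a \<in> A. a $ i \<noteq> 0} \<inter> K \<noteq> {}} = supp A K"
    unfolding supp_def by simp
  thus ?thesis unfolding meet_count_def by simp
qed

lemma in_cs:
  fixes A :: "(real^'n) set"
  assumes "finite A" "K face_of convex hull A"
  shows "K \<subseteq> coord_subspace (supp A K)"
proof -
  have "A \<inter> K \<subseteq> coord_subspace (supp A K)"
    unfolding coord_subspace_def supp_def by auto
  hence "convex hull (A \<inter> K) \<subseteq> coord_subspace (supp A K)"
    by (rule hull_minimal) (rule subspace_imp_convex[OF cs_subspace])
  thus ?thesis using face_hull_eq[OF assms] by simp
qed

lemma affdim_le:
  fixes A :: "(real^'n) set"
  assumes "finite A" "K face_of convex hull A"
  shows "aff_dim K \<le> int (card (supp A K))"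
proof -
  have "aff_dim K \<le> aff_dim (coord_subspace (supp A K))"
    using in_cs[OF assms] by (rule aff_dim_subset)
  also have "\<dots> = int (dim (coord_subspace (supp A K)))"
    by (rule aff_dim_subspace[OF cs_subspace])
  also have "\<dots> = int (card (supp A K))" by (simp only: cs_dim)
  finally show ?thesis .
qed

lemma daughter_i:
  fixes A :: "(real^'n) set"
  assumes "finite A" "\<forall>a\<in>A. a $ i \<ge> 0"
  shows "daughter A (convex hull {a \<in> A. a $ i \<noteq> 0})"
proof -
  define P where "P = convex hull A"
  define D where "D = convex hull {a \<in> A. a $ i \<noteq> 0}"
  define F where "F = P \<inter> {x. axis i 1 \<bullet> x = 0}"
  have Pge: "\<And>x. x \<in> P \<Longrightarrow> axis i 1 \<bullet> x \<ge> 0"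
  proof -
    have "A \<subseteq> {x. axis i 1 \<bullet> x \<ge> 0}" using assms(2) by (auto simp: inner_axis')
    hence "P \<subseteq> {x. axis i 1 \<bullet> x \<ge> 0}"
      unfolding P_def by (simp add: convex_halfspace_ge hull_minimal)
    thus "\<And>x. x \<in> P \<Longrightarrow> axis i 1 \<bullet> x \<ge> 0" by blast
  qed
  have Fface: "F face_of P" unfolding F_def
    using face_of_Int_supporting_hyperplane_ge[where S=P and a="axis i 1" and b=0] Pge P_def by simp
  have Dpos: "D \<subseteq> {x. axis i 1 \<bullet> x > 0}"
  proof -
    have "{a \<in> A. a $ i \<noteq> 0} \<subseteq> {x. axis i 1 \<bullet> x > 0}"
      using assms(2) by (auto simp: inner_axis' less_le)
    thus ?thesis unfolding D_def by (simp add: convex_halfspace_gt hull_minimal)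
  qed
  have Fdisj: "F \<inter> D = {}" using Dpos unfolding F_def by auto
  have key: "\<And>K. K face_of P \<Longrightarrow> K \<inter> D = {} \<Longrightarrow> K \<subseteq> F"
  proof -
    fix K assume K: "K face_of P" "K \<inter> D = {}"
    have "{a \<in> A. a $ i \<noteq> 0} \<inter> K = {}"
      using meet_iff[OF assms(1) K(1)[unfolded P_def], of "{a \<in> A. a $ i \<noteq> 0}"] K(2)
      unfolding D_def by blast
    hence "A \<inter> K \<subseteq> {x. axis i 1 \<bullet> x = 0}" by (auto simp: inner_axis')
    hence "convex hull (A \<inter> K) \<subseteq> {x. axis i 1 \<bullet> x = 0}"
      by (simp add: convex_hyperplane hull_minimal)
    hence "K \<subseteq> {x. axis i 1 \<bullet> x = 0}"
      using face_hull_eq[OF assms(1) K(1)[unfolded P_def]] by simp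
    thus "K \<subseteq> F" unfolding F_def using K(1) face_of_imp_subset by blast
  qed
  have MD: "max_disjoint_faces A D = {F}"
  proof
    show "max_disjoint_faces A D \<subseteq> {F}"
    proof
      fix K assume "K \<in> max_disjoint_faces A D"
      hence K: "K face_of P" "K \<inter> D = {}"
        "\<And>K'. K' face_of P \<and> K' \<inter> D = {} \<and> K \<subseteq> K' \<Longrightarrow> K' = K"
        unfolding max_disjoint_faces_def P_def by auto
      show "K \<in> {F}" using K(3)[of F] key[OF K(1,2)] Fface Fdisj by auto
    qed
    show "{F} \<subseteq> max_disjoint_faces A D"
      unfolding max_disjoint_faces_def using Fface Fdisj key P_def by auto
  qed
  have AF: "A - F = {a \<in> A. a $ i \<noteq> 0}"
    unfolding F_def P_def using hull_inc[of _ A convex] by (auto simp: inner_axis')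
  show ?thesis unfolding daughter_def D_def[symmetric] MD
    using AF D_def by auto
qed

lemma min_face_face:
  fixes P :: "(real^'n) set"
  assumes "convex P"
  shows "min_face P g face_of P"
proof (cases "min_face P g = {}")
  case True thus ?thesis by simp
next
  case False
  then obtain x0 where x0: "x0 \<in> P" "\<forall>y\<in>P. g \<bullet> x0 \<le> g \<bullet> y"
    unfolding min_face_def by blast
  have "min_face P g = P \<inter> {x. g \<bullet> x = g \<bullet> x0}"
    unfolding min_face_def using x0 by force
  moreover have "(P \<inter> {x. g \<bullet> x = g \<bullet> x0}) face_of P"
    using face_of_Int_supporting_hyperplane_ge[OF assms, where a=g and b="g \<bullet> x0"] x0 by blast
  ultimately show ?thesis by simp
qed

theorem lemma6p1:
  fixes A :: "(real^'n) set"
  assumes "finite A"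
    and "\<forall>a\<in>A. \<forall>i. a $ i \<in> \<int> \<and> a $ i \<ge> 0"
    and "\<forall>i. \<not> A \<subseteq> {x. x $ i = 0}"
  defines "\<Delta> \<equiv> (\<lambda>i. convex hull {a \<in> A. a $ i \<noteq> 0})"
  shows "semi_interlaced A \<Delta> \<and>
         (\<forall>K. K face_of convex hull A \<and> K \<noteq> {} \<and> K \<noteq> convex hull A \<longrightarrow>
           (suture A \<Delta> K \<longleftrightarrow>
            (\<exists>I. K \<subseteq> coord_subspace I \<and> int (dim (coord_subspace I)) = aff_dim K)))"
proof (intro conjI allI impI)
  show "semi_interlaced A \<Delta>"
    unfolding semi_interlaced_def
  proof (intro conjI allI impI)
    fix i show "daughter A (\<Delta> i)" unfolding \<Delta>_def using daughter_i assms(1,2) by blast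
  next
    fix \<gamma> :: "real^'n" assume "\<gamma> \<noteq> 0"
    define F where "F = min_face (convex hull A) \<gamma>"
    have Ff: "F face_of convex hull A" unfolding F_def by (rule min_face_face) simp
    show "aff_dim F \<le> int (meet_count \<Delta> F)"
      using affdim_le[OF assms(1) Ff] count_eq[OF assms(1) Ff] unfolding \<Delta>_def F_def by simp
  qed
next
  fix K assume K: "K face_of convex hull A \<and> K \<noteq> {} \<and> K \<noteq> convex hull A"
  hence Kf: "K face_of convex hull A" by blast
  have c: "meet_count \<Delta> K = card (supp A K)" using count_eq[OF assms(1) Kf] \<Delta>_def by simp
  have le: "aff_dim K \<le> int (card (supp A K))" using affdim_le[OF assms(1) Kf] .
  show "suture A \<Delta> K \<longleftrightarrow>
        (\<exists>I. K \<subseteq> coord_subspace I \<and> int (dim (coord_subspace I)) = aff_dim K)"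
  proof
    assume "suture A \<Delta> K"
    hence "int (card (supp A K)) = aff_dim K" unfolding suture_def c by simp
    thus "\<exists>I. K \<subseteq> coord_subspace I \<and> int (dim (coord_subspace I)) = aff_dim K"
      using in_cs[OF assms(1) Kf] cs_dim by metis
  next
    assume "\<exists>I. K \<subseteq> coord_subspace I \<and> int (dim (coord_subspace I)) = aff_dim K"
    then obtain I where I: "K \<subseteq> coord_subspace I" "int (card I) = aff_dim K"
      using cs_dim by metis
    have "supp A K \<subseteq> I" using I(1) unfolding supp_def coord_subspace_def by auto
    hence "card (supp A K) \<le> card I" by (simp add: card_mono)
    thus "suture A \<Delta> K" unfolding suture_def c using Kf le I(2) by simp
  qed
qed

end
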